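(* For every $k\ge 1$, $$B_k'=\{[f,l]: f\in B_k,\ l\in G_k\}=\{[l,f]: f\in B_k,\ l\in G_k\}.$$
   Context: $B_k\cong\wr_{i=1}^kC_2\cong\mathrm{Syl}_2(S_{2^k})$ is the automorphism group of the binary rooted tree of depth $k$, and $G_k\le B_k$ is the subgroup of automorphisms acting by even permutations on the $2^k$ leaves ($G_k\cong\mathrm{Syl}_2(A_{2^k})$). $[a,b]=aba^{-1}b^{-1}$. *)

theory Defs
  imports "HOL-Algebra.Algebra" "HOL-Combinatorics.Permutations"
begin

text \<open>The binary rooted tree of depth k: vertices are the binary words (bool lists)
  of length at most k; the root is the empty word; the parent of a nonempty word
  is obtained by deleting its last letter.\<close>

definition tree_vertices :: "nat \<Rightarrow> bool list set" where
  "tree_vertices k = {xs. length xs \<le> k}"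

definition tree_leaves :: "nat \<Rightarrow> bool list set" where
  "tree_leaves k = {xs. length xs = k}"

definition tree_aut :: "nat \<Rightarrow> (bool list \<Rightarrow> bool list) \<Rightarrow> bool" where
  "tree_aut k f \<longleftrightarrow> f permutes tree_vertices k \<and>
     (\<forall>xs \<in> tree_vertices k. xs \<noteq> [] \<longrightarrow> f (butlast xs) = butlast (f xs))"

definition B :: "nat \<Rightarrow> (bool list \<Rightarrow> bool list) monoid" where
  "B k = \<lparr> carrier = {f. tree_aut k f}, monoid.mult = (\<lambda>f g. f \<circ> g), one = id \<rparr>"

definition leaf_action :: "nat \<Rightarrow> (bool list \<Rightarrow> bool list) \<Rightarrow> (bool list \<Rightarrow> bool list)" where
  "leaf_action k f = (\<lambda>xs. if xs \<in> tree_leaves k then f xs else xs)"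

definition G :: "nat \<Rightarrow> (bool list \<Rightarrow> bool list) set" where
  "G k = {f \<in> carrier (B k). evenperm (leaf_action k f)}"

definition comm :: "nat \<Rightarrow> (bool list \<Rightarrow> bool list) \<Rightarrow> (bool list \<Rightarrow> bool list) \<Rightarrow> (bool list \<Rightarrow> bool list)" where
  "comm k a b = a \<otimes>\<^bsub>B k\<^esub> b \<otimes>\<^bsub>B k\<^esub> inv\<^bsub>B k\<^esub> a \<otimes>\<^bsub>B k\<^esub> inv\<^bsub>B k\<^esub> b"

end

theory Submission
  imports Defs "HOL-Library.Z2"
begin

abbreviation finv :: "('a \<Rightarrow> 'b) \<Rightarrow> 'b \<Rightarrow> 'a" where "finv f \<equiv> inv_into UNIV f"

definition lvl :: "nat \<Rightarrow> bool list set" where "lvl n = {xs. length xs = n}"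

lemma aut_parent:
  assumes "tree_aut k f" "xs \<in> tree_vertices k" "xs \<noteq> []"
  shows "f (butlast xs) = butlast (f xs)"
  using assms by (simp add: tree_aut_def)

lemma aut_nil:
  assumes "tree_aut k f" shows "f [] = []"
proof -
  have perm: "f permutes tree_vertices k" using assms by (simp add: tree_aut_def)
  have nz: "f xs \<noteq> []" if "xs \<in> tree_vertices k" "xs \<noteq> []" for xs
  proof
    assume "f xs = []"
    then have "f (butlast xs) = f xs" using assms that by (simp add: tree_aut_def)
    then have "butlast xs = xs" using permutes_inj[OF perm] by (simp add: inj_eq)
    then show False using that(2) by (cases xs rule: rev_exhaust) auto
  qed
  have "[] \<in> tree_vertices k" by (simp add: tree_vertices_def)
  then obtain ys where ys: "f ys = []" using permutes_surj[OF perm] by (metis surjD)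
  have "ys \<in> tree_vertices k"
    using ys permutes_not_in[OF perm, of ys] \<open>[] \<in> tree_vertices k\<close> by auto
  then have "ys = []" using nz ys by blast
  then show ?thesis using ys by simp
qed

lemma aut_len:
  assumes "tree_aut k f" shows "length (f xs) = length xs"
proof (induction xs rule: rev_induct)
  case Nil then show ?case using aut_nil[OF assms] by simp
next
  case (snoc x ys)
  have perm: "f permutes tree_vertices k" using assms by (simp add: tree_aut_def)
  show ?case
  proof (cases "ys @ [x] \<in> tree_vertices k")
    case False then show ?thesis using permutes_not_in[OF perm] by simp
  next
    case True
    have e: "f ys = butlast (f (ys @ [x]))" using aut_parent[OF assms True] by simp
    have "f (ys @ [x]) \<noteq> []"
    proof
      assume "f (ys @ [x]) = []"
      then have "f (ys@[x]) = f []" using aut_nil[OF assms] by simp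
      then show False using permutes_inj[OF perm] by (simp add: inj_eq)
    qed
    then have "length (f (ys @ [x])) = Suc (length (butlast (f (ys @ [x]))))" by simp
    then show ?thesis using e snoc by simp
  qed
qed

definition sw :: "(bool list \<Rightarrow> bool list) \<Rightarrow> bool list \<Rightarrow> bool" where
  "sw f y = last (f (y @ [False]))"

lemma aut_child:
  assumes "tree_aut k f" "length y < k"
  shows "f (y @ [b]) = f y @ [b \<noteq> sw f y]"
proof -
  have perm: "f permutes tree_vertices k" using assms by (simp add: tree_aut_def)
  have c: "f (y @ [c]) = f y @ [last (f (y @ [c]))]" for c
  proof -
    have "y @ [c] \<in> tree_vertices k" using assms(2) by (simp add: tree_vertices_def)
    then have e: "f y = butlast (f (y @ [c]))" using aut_parent[OF assms(1), of "y@[c]"] by simp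
    have "f (y @ [c]) \<noteq> []" using aut_len[OF assms(1), of "y@[c]"] by auto
    then show ?thesis using e by simp
  qed
  have "last (f (y @ [True])) \<noteq> last (f (y @ [False]))"
  proof
    assume "last (f (y @ [True])) = last (f (y @ [False]))"
    then have "f (y @ [True]) = f (y @ [False])" using c by metis
    then show False using permutes_inj[OF perm] by (simp add: inj_eq)
  qed
  then show ?thesis using c[of b] unfolding sw_def by (cases b) auto
qed

lemma aut_bij_lvl:
  assumes "tree_aut k f" shows "bij_betw f (lvl i) (lvl i)"
proof -
  have perm: "f permutes tree_vertices k" using assms by (simp add: tree_aut_def)
  have "f ` lvl i = lvl i"
  proof
    show "f ` lvl i \<subseteq> lvl i" using aut_len[OF assms] by (auto simp: lvl_def)
    show "lvl i \<subseteq> f ` lvl i"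
    proof
      fix y assume y: "y \<in> lvl i"
      obtain x where "f x = y" using permutes_surj[OF perm] by (metis surjD)
      then show "y \<in> f ` lvl i" using y aut_len[OF assms, of x] by (auto simp: lvl_def)
    qed
  qed
  moreover have "inj_on f (lvl i)" using inj_on_subset[OF permutes_inj[OF perm] subset_UNIV] .
  ultimately show ?thesis by (simp add: bij_betw_def)
qed

lemma aut_comp:
  assumes "tree_aut k f" "tree_aut k g" shows "tree_aut k (f \<circ> g)"
  unfolding tree_aut_def
proof (intro conjI ballI impI)
  show "f \<circ> g permutes tree_vertices k"
    using assms permutes_compose by (auto simp: tree_aut_def)
  fix xs assume xs: "xs \<in> tree_vertices k" "xs \<noteq> []"
  have "g xs \<in> tree_vertices k" "g xs \<noteq> []" using xs aut_len[OF assms(2), of xs]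
    by (auto simp: tree_vertices_def)
  then show "(f \<circ> g) (butlast xs) = butlast ((f \<circ> g) xs)"
    using aut_parent[OF assms(1)] aut_parent[OF assms(2) xs] by simp
qed

lemma aut_inv:
  assumes "tree_aut k f" shows "tree_aut k (finv f)"
  unfolding tree_aut_def
proof (intro conjI ballI impI)
  have perm: "f permutes tree_vertices k" using assms by (simp add: tree_aut_def)
  show "finv f permutes tree_vertices k" using permutes_inv[OF perm] .
  fix xs assume xs: "xs \<in> tree_vertices k" "xs \<noteq> []"
  define ys where "ys = finv f xs"
  have fy: "f ys = xs" unfolding ys_def using permutes_inverses(1)[OF perm] by simp
  have "length ys = length xs" using aut_len[OF assms, of ys] fy by simp
  then have ys: "ys \<in> tree_vertices k" "ys \<noteq> []" using xs by (auto simp: tree_vertices_def)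
  have "f (butlast ys) = butlast xs" using assms ys fy by (simp add: tree_aut_def)
  then have "finv f (butlast xs) = butlast ys"
    using permutes_inverses(2)[OF perm, of "butlast ys"] by simp
  then show "finv f (butlast xs) = butlast (finv f xs)" unfolding ys_def by simp
qed

lemma aut_id: "tree_aut k id"
  by (simp add: tree_aut_def permutes_id)

lemma group_B: "group (B k)"
proof (rule groupI)
  show "\<And>x y. x \<in> carrier (B k) \<Longrightarrow> y \<in> carrier (B k) \<Longrightarrow> x \<otimes>\<^bsub>B k\<^esub> y \<in> carrier (B k)"
    by (simp add: B_def aut_comp)
  show "\<one>\<^bsub>B k\<^esub> \<in> carrier (B k)" by (simp add: B_def aut_id)
  show "\<And>x y z. x \<in> carrier (B k) \<Longrightarrow> y \<in> carrier (B k) \<Longrightarrow> z \<in> carrier (B k) \<Longrightarrow>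
      x \<otimes>\<^bsub>B k\<^esub> y \<otimes>\<^bsub>B k\<^esub> z = x \<otimes>\<^bsub>B k\<^esub> (y \<otimes>\<^bsub>B k\<^esub> z)"
    by (simp add: B_def o_assoc)
  show "\<And>x. x \<in> carrier (B k) \<Longrightarrow> \<one>\<^bsub>B k\<^esub> \<otimes>\<^bsub>B k\<^esub> x = x" by (simp add: B_def)
  show "\<And>x. x \<in> carrier (B k) \<Longrightarrow> \<exists>y\<in>carrier (B k). y \<otimes>\<^bsub>B k\<^esub> x = \<one>\<^bsub>B k\<^esub>"
  proof -
    fix x assume "x \<in> carrier (B k)"
    then have a: "tree_aut k x" by (simp add: B_def)
    then have "finv x \<circ> x = id" using permutes_inv_o(2) by (auto simp: tree_aut_def)
    then show "\<exists>y\<in>carrier (B k). y \<otimes>\<^bsub>B k\<^esub> x = \<one>\<^bsub>B k\<^esub>"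
      using aut_inv[OF a] by (auto simp: B_def)
  qed
qed

lemma B_inv:
  assumes "tree_aut k f" shows "inv\<^bsub>B k\<^esub> f = finv f"
proof -
  have "finv f \<circ> f = id" using assms permutes_inv_o(2) by (auto simp: tree_aut_def)
  then show ?thesis using group.inv_equality[OF group_B[of k]] assms aut_inv[OF assms]
    by (simp add: B_def)
qed

lemma comm_eq:
  assumes "tree_aut k a" "tree_aut k b"
  shows "comm k a b = a \<circ> b \<circ> finv a \<circ> finv b"
  unfolding comm_def B_inv[OF assms(1)] B_inv[OF assms(2)] by (simp add: B_def)


definition lp :: "(bool list \<Rightarrow> bool list) \<Rightarrow> bool" where
  "lp f \<longleftrightarrow> (\<forall>xs. length (f xs) = length xs)"

lemma aut_lp: "tree_aut k f \<Longrightarrow> lp f"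
  using aut_len by (auto simp: lp_def)

definition extd :: "nat \<Rightarrow> (bool list \<Rightarrow> bool) \<Rightarrow> (bool list \<Rightarrow> bool list) \<Rightarrow> bool list \<Rightarrow> bool list" where
  "extd k u h = (\<lambda>xs. if length xs \<le> k then h xs
      else if length xs = Suc k then h (butlast xs) @ [last xs \<noteq> u (butlast xs)] else xs)"

lemma extd_comp:
  assumes "lp m"
  shows "extd k u h \<circ> extd k w m = extd k (\<lambda>z. w z \<noteq> u (m z)) (h \<circ> m)"
proof (rule ext)
  fix xs
  have L: "length (m ys) = length ys" for ys using assms by (simp add: lp_def)
  show "(extd k u h \<circ> extd k w m) xs = extd k (\<lambda>z. w z \<noteq> u (m z)) (h \<circ> m) xs"
  proof (cases "length xs \<le> k")
    case True then show ?thesis using L[of xs] by (simp add: extd_def)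
  next
    case False
    show ?thesis
    proof (cases "length xs = Suc k")
      case True
      then have "length (butlast xs) = k" by simp
      then show ?thesis using True L[of "butlast xs"]
        by (cases "last xs"; cases "w (butlast xs)"; cases "u (m (butlast xs))") (simp_all add: extd_def)
    next
      case False2: False
      then show ?thesis using False by (simp add: extd_def)
    qed
  qed
qed

lemma extd_lp: "lp h \<Longrightarrow> lp (extd k u h)"
  by (simp add: lp_def extd_def)

lemma extd_id: "extd k (\<lambda>_. False) id = id"
proof (rule ext)
  fix xs show "extd k (\<lambda>_. False) id xs = id xs"
    by (cases xs rule: rev_exhaust) (auto simp: extd_def)
qed

lemma extd_cong:
  assumes "\<And>z. z \<in> lvl k \<Longrightarrow> u z = u' z"
  shows "extd k u h = extd k u' h"
proof (rule ext)
  fix xs show "extd k u h xs = extd k u' h xs"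
    using assms[of "butlast xs"] by (auto simp: extd_def lvl_def)
qed

lemma extd_inv_comps:
  assumes "tree_aut k h"
  shows "extd k u h \<circ> extd k (\<lambda>z. u (finv h z)) (finv h) = id"
    and "extd k (\<lambda>z. u (finv h z)) (finv h) \<circ> extd k u h = id"
proof -
  have perm: "h permutes tree_vertices k" using assms by (simp add: tree_aut_def)
  have "extd k u h \<circ> extd k (\<lambda>z. u (finv h z)) (finv h) = extd k (\<lambda>_. False) (h \<circ> finv h)"
    using extd_comp[OF aut_lp[OF aut_inv[OF assms]]] by simp
  also have "\<dots> = id" using permutes_inv_o(1)[OF perm] extd_id by simp
  finally show "extd k u h \<circ> extd k (\<lambda>z. u (finv h z)) (finv h) = id" .
  have "extd k (\<lambda>z. u (finv h z)) (finv h) \<circ> extd k u h = extd k (\<lambda>_. False) (finv h \<circ> h)"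
    using extd_comp[OF aut_lp[OF assms]] permutes_inverses(2)[OF perm] by simp
  also have "\<dots> = id" using permutes_inv_o(2)[OF perm] extd_id by simp
  finally show "extd k (\<lambda>z. u (finv h z)) (finv h) \<circ> extd k u h = id" .
qed

lemma extd_aut:
  assumes "tree_aut k h" shows "tree_aut (Suc k) (extd k u h)"
  unfolding tree_aut_def
proof (intro conjI ballI impI)
  let ?f = "extd k u h" and ?g = "extd k (\<lambda>z. u (finv h z)) (finv h)"
  have c1: "?f (?g x) = x" for x using fun_cong[OF extd_inv_comps(1)[OF assms]] by simp
  have c2: "?g (?f x) = x" for x using fun_cong[OF extd_inv_comps(2)[OF assms]] by simp
  have lf: "length (?f x) = length x" for x using extd_lp[OF aut_lp[OF assms]] by (simp add: lp_def)
  have lg: "length (?g x) = length x" for x using extd_lp[OF aut_lp[OF aut_inv[OF assms]]] by (simp add: lp_def)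
  have "bij_betw ?f (tree_vertices (Suc k)) (tree_vertices (Suc k))"
    by (rule bij_betw_byWitness[where f'="?g"]) (auto simp: c1 c2 lf lg tree_vertices_def)
  moreover have "?f x = x" if "x \<notin> tree_vertices (Suc k)" for x
    using that by (simp add: extd_def tree_vertices_def)
  ultimately show "?f permutes tree_vertices (Suc k)" by (rule bij_imp_permutes)
  fix xs assume xs: "xs \<in> tree_vertices (Suc k)" "xs \<noteq> []"
  show "?f (butlast xs) = butlast (?f xs)"
  proof (cases "length xs \<le> k")
    case True
    then have "xs \<in> tree_vertices k" by (simp add: tree_vertices_def)
    moreover have "length (butlast xs) \<le> k" using True by simp
    ultimately show ?thesis using aut_parent[OF assms _ xs(2)] True by (simp add: extd_def)
  next
    case False
    then have "length xs = Suc k" using xs by (simp add: tree_vertices_def)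
    then show ?thesis by (simp add: extd_def)
  qed
qed

lemma extd_inv:
  assumes "tree_aut k h" shows "finv (extd k u h) = extd k (\<lambda>z. u (finv h z)) (finv h)"
  using inv_unique_comp[OF extd_inv_comps[OF assms]] .

definition rst :: "nat \<Rightarrow> (bool list \<Rightarrow> bool list) \<Rightarrow> bool list \<Rightarrow> bool list" where
  "rst k g = (\<lambda>xs. if length xs \<le> k then g xs else xs)"

lemma rst_aut:
  assumes "tree_aut (Suc k) g" shows "tree_aut k (rst k g)"
  unfolding tree_aut_def
proof (intro conjI ballI impI)
  have perm: "g permutes tree_vertices (Suc k)" using assms by (simp add: tree_aut_def)
  let ?f = "rst k g" and ?g = "rst k (finv g)"
  have L: "length (g x) = length x" "length (finv g x) = length x" for x
    using aut_len[OF assms] aut_len[OF aut_inv[OF assms]] by auto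
  have c1: "?f (?g x) = x" for x using L permutes_inverses(1)[OF perm] by (simp add: rst_def)
  have c2: "?g (?f x) = x" for x using L permutes_inverses(2)[OF perm] by (simp add: rst_def)
  have "bij_betw ?f (tree_vertices k) (tree_vertices k)"
    by (rule bij_betw_byWitness[where f'="?g"]) (auto simp: c1 c2 L tree_vertices_def rst_def permutes_inverses[OF perm])
  moreover have "?f x = x" if "x \<notin> tree_vertices k" for x
    using that by (simp add: rst_def tree_vertices_def)
  ultimately show "?f permutes tree_vertices k" by (rule bij_imp_permutes)
  fix xs assume xs: "xs \<in> tree_vertices k" "xs \<noteq> []"
  then have "xs \<in> tree_vertices (Suc k)" by (simp add: tree_vertices_def)
  then show "?f (butlast xs) = butlast (?f xs)"
    using aut_parent[OF assms _ xs(2)] xs by (auto simp: rst_def tree_vertices_def)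
qed

lemma g_decomp:
  assumes "tree_aut (Suc k) g" shows "g = extd k (sw g) (rst k g)"
proof (rule ext)
  fix xs
  have perm: "g permutes tree_vertices (Suc k)" using assms by (simp add: tree_aut_def)
  show "g xs = extd k (sw g) (rst k g) xs"
  proof (cases "length xs = Suc k")
    case True
    then obtain y b where xs: "xs = y @ [b]" by (cases xs rule: rev_exhaust) auto
    then have "length y = k" using True by simp
    then show ?thesis using aut_child[OF assms, of y b] xs by (simp add: extd_def rst_def)
  next
    case False
    then show ?thesis using permutes_not_in[OF perm, of xs]
      by (simp add: extd_def rst_def tree_vertices_def)
  qed
qed

lemma sw_rst: "length y < k \<Longrightarrow> sw (rst k g) y = sw g y"
  by (simp add: sw_def rst_def)

lemma sw_extd: "length y = k \<Longrightarrow> sw (extd k u h) y = u y"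
  by (simp add: sw_def extd_def)

lemma sw_comp:
  assumes "tree_aut k f" "tree_aut k g" "length y < k"
  shows "sw (f \<circ> g) y = (sw g y \<noteq> sw f (g y))"
proof -
  have "(f \<circ> g) (y @ [False]) = f (g y @ [sw g y])" using aut_child[OF assms(2,3), of False] by simp
  also have "\<dots> = f (g y) @ [sw g y \<noteq> sw f (g y)]"
    using aut_child[OF assms(1), of "g y"] aut_len[OF assms(2), of y] assms(3) by simp
  finally show ?thesis by (simp add: sw_def)
qed

definition par :: "(bool list \<Rightarrow> bool list) \<Rightarrow> nat \<Rightarrow> bit" where
  "par f i = (\<Sum>y\<in>lvl i. of_bool (sw f y))"

lemma xor_bit: "(of_bool (a \<noteq> b) :: bit) = of_bool a + of_bool b"
  by (cases a; cases b) simp_all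

lemma bit_self: "(x::bit) + x = 0"
  by (cases x) simp_all

lemma par_comp:
  assumes "tree_aut k f" "tree_aut k g" "i < k"
  shows "par (f \<circ> g) i = par f i + par g i"
proof -
  have "par (f \<circ> g) i = (\<Sum>y\<in>lvl i. of_bool (sw g y) + of_bool (sw f (g y)))"
    unfolding par_def
    by (rule sum.cong) (auto simp: sw_comp[OF assms(1,2)] xor_bit lvl_def assms(3))
  also have "\<dots> = par g i + (\<Sum>y\<in>lvl i. of_bool (sw f (g y)))"
    unfolding par_def by (rule sum.distrib)
  also have "(\<Sum>y\<in>lvl i. of_bool (sw f (g y))) = par f i"
    unfolding par_def using sum.reindex_bij_betw[OF aut_bij_lvl[OF assms(2)]] by simp
  finally show ?thesis by (simp only: add.commute)
qed

lemma par_id: "par id i = 0"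
  by (simp add: par_def sw_def)

lemma par_inv:
  assumes "tree_aut k f" "i < k" shows "par (finv f) i = par f i"
proof -
  have perm: "f permutes tree_vertices k" using assms by (simp add: tree_aut_def)
  have "0 = par (f \<circ> finv f) i" using permutes_inv_o(1)[OF perm] par_id by simp
  also have "\<dots> = par f i + par (finv f) i" using par_comp[OF assms(1) aut_inv[OF assms(1)] assms(2)] .
  finally have "par f i + par (finv f) i = 0" by simp
  then show ?thesis by (metis add_diff_cancel_left' bit_self diff_add_cancel)
qed

lemma par_comm:
  assumes "tree_aut k a" "tree_aut k b" "i < k"
  shows "par (a \<circ> b \<circ> finv a \<circ> finv b) i = 0"
proof -
  note A = assms(1) assms(2) aut_inv[OF assms(1)] aut_inv[OF assms(2)]
  have t1: "tree_aut k (a \<circ> b)" using A by (simp add: aut_comp)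
  have t2: "tree_aut k (a \<circ> b \<circ> finv a)" using t1 A by (simp add: aut_comp)
  have "par (a \<circ> b \<circ> finv a \<circ> finv b) i = par (a \<circ> b \<circ> finv a) i + par (finv b) i"
    by (rule par_comp[OF t2 A(4) assms(3)])
  also have "par (a \<circ> b \<circ> finv a) i = par (a \<circ> b) i + par (finv a) i"
    by (rule par_comp[OF t1 A(3) assms(3)])
  also have "par (a \<circ> b) i = par a i + par b i"
    by (rule par_comp[OF A(1,2) assms(3)])
  also have "par (finv a) i = par a i" by (rule par_inv[OF A(1) assms(3)])
  also have "par (finv b) i = par b i" by (rule par_inv[OF A(2) assms(3)])
  also have "par a i + par b i + par a i + par b i = (par a i + par a i) + (par b i + par b i)"
    by (simp only: ac_simps)
  finally show ?thesis by (simp only: bit_self add_0_left)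
qed


lemma finite_lvl: "finite (lvl k)"
proof -
  have "lvl k = {xs. set xs \<subseteq> (UNIV::bool set) \<and> length xs = k}" by (auto simp: lvl_def)
  then show ?thesis using finite_lists_length_eq[of "UNIV::bool set" k] by simp
qed

lemma sum_lvl_Suc:
  fixes F :: "bool list \<Rightarrow> 'a::comm_monoid_add"
  shows "(\<Sum>x\<in>lvl (Suc k). F x) = (\<Sum>z\<in>lvl k. F (z @ [False]) + F (z @ [True]))"
proof -
  have e: "lvl (Suc k) = (\<lambda>z. z @ [False]) ` lvl k \<union> (\<lambda>z. z @ [True]) ` lvl k"
  proof
    show "lvl (Suc k) \<subseteq> (\<lambda>z. z @ [False]) ` lvl k \<union> (\<lambda>z. z @ [True]) ` lvl k"
    proof
      fix x assume "x \<in> lvl (Suc k)"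
      then obtain z b where "x = z @ [b]" "length z = k"
        by (cases x rule: rev_exhaust) (auto simp: lvl_def)
      then show "x \<in> (\<lambda>z. z @ [False]) ` lvl k \<union> (\<lambda>z. z @ [True]) ` lvl k"
        by (cases b) (auto simp: lvl_def)
    qed
  qed (auto simp: lvl_def)
  have d: "(\<lambda>z. z @ [False]) ` lvl k \<inter> (\<lambda>z. z @ [True]) ` lvl k = {}" by auto
  have i1: "inj_on (\<lambda>z. z @ [False]) (lvl k)" by (auto simp: inj_on_def)
  have i2: "inj_on (\<lambda>z. z @ [True]) (lvl k)" by (auto simp: inj_on_def)
  have "(\<Sum>x\<in>lvl (Suc k). F x) = (\<Sum>x\<in>(\<lambda>z. z @ [False]) ` lvl k. F x) + (\<Sum>x\<in>(\<lambda>z. z @ [True]) ` lvl k. F x)"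
    unfolding e by (rule sum.union_disjoint) (auto simp: finite_lvl d)
  also have "\<dots> = (\<Sum>z\<in>lvl k. F (z @ [False])) + (\<Sum>z\<in>lvl k. F (z @ [True]))"
    by (simp add: sum.reindex[OF i1] sum.reindex[OF i2])
  finally show ?thesis by (simp add: sum.distrib)
qed

definition sol :: "nat \<Rightarrow> (bool list \<Rightarrow> bool list) \<Rightarrow> bool" where
  "sol k m \<longleftrightarrow> (\<forall>t. (\<Sum>z\<in>lvl k. (of_bool (t z) :: bit)) = 0 \<longrightarrow>
      (\<exists>u::bool list \<Rightarrow> bool. \<forall>z\<in>lvl k. (u z \<noteq> u (m z)) = t z))"

lemma solD:
  assumes "sol k m" "(\<Sum>z\<in>lvl k. (of_bool (t z) :: bit)) = 0"
  obtains u :: "bool list \<Rightarrow> bool" where "\<forall>z\<in>lvl k. (u z \<noteq> u (m z)) = t z"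
proof -
  have "\<exists>u::bool list \<Rightarrow> bool. \<forall>z\<in>lvl k. (u z \<noteq> u (m z)) = t z"
    by (rule mp[OF spec[OF assms(1)[unfolded sol_def]] assms(2)])
  then show thesis by (elim exE) (rule that)
qed

lemma solE:
  assumes "sol k m" "(\<Sum>z\<in>lvl k. (of_bool (t z) :: bit)) = 0"
  shows "\<exists>u::bool list \<Rightarrow> bool. \<forall>z\<in>lvl k. (u z \<noteq> u (m z)) = t z"
  by (rule mp[OF spec[OF assms(1)[unfolded sol_def]] assms(2)])

lemma sol0: "sol 0 id"
  unfolding sol_def
proof (intro allI impI)
  fix t :: "bool list \<Rightarrow> bool"
  assume "(\<Sum>z\<in>lvl 0. (of_bool (t z) :: bit)) = 0"
  moreover have "lvl 0 = {[]}" by (auto simp: lvl_def)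
  ultimately have "\<not> t []" by (cases "t []") simp_all
  then show "\<exists>u. \<forall>z\<in>lvl 0. (u z \<noteq> u (id z)) = t z" using \<open>lvl 0 = {[]}\<close> by auto
qed

lemma xor3_bit: "(of_bool (a \<noteq> (b \<noteq> c)) :: bit) = of_bool a + of_bool b + of_bool c"
  by (simp only: xor_bit add.assoc)

lemma flip_pt: "(of_bool (a \<noteq> (w \<and> \<not> d)) :: bit) = of_bool (a \<noteq> (w \<and> d)) + of_bool w"
  by (cases a; cases w; cases d) simp_all

lemma sol_lift:
  assumes S: "sol k m" and W: "(\<Sum>z\<in>lvl k. (of_bool (w z) :: bit)) = 1"
  shows "sol (Suc k) (extd k w m)"
  unfolding sol_def
proof (intro allI impI)
  fix T :: "bool list \<Rightarrow> bool"
  assume hT: "(\<Sum>x\<in>lvl (Suc k). (of_bool (T x) :: bit)) = 0"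
  define T' where "T' z = (T (z @ [False]) \<noteq> T (z @ [True]))" for z
  have "(\<Sum>z\<in>lvl k. (of_bool (T' z) :: bit)) = (\<Sum>z\<in>lvl k. of_bool (T (z @ [False])) + of_bool (T (z @ [True])))"
    by (simp only: T'_def xor_bit)
  also have "\<dots> = 0" using hT by (simp only: sum_lvl_Suc)
  finally have s0: "(\<Sum>z\<in>lvl k. (of_bool (T' z) :: bit)) = 0" .
  from solE[OF S s0] obtain D0 :: "bool list \<Rightarrow> bool" where D0: "\<forall>z\<in>lvl k. (D0 z \<noteq> D0 (m z)) = T' z" ..
  define SS where "SS D = (\<Sum>z\<in>lvl k. (of_bool (T (z @ [False]) \<noteq> (w z \<and> D (m z))) :: bit))" for D
  have flip: "SS (\<lambda>z. \<not> D0 z) = SS D0 + 1"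
    unfolding SS_def flip_pt sum.distrib W ..
  obtain D where D: "\<forall>z\<in>lvl k. (D z \<noteq> D (m z)) = T' z" and SD: "SS D = 0"
  proof (cases "SS D0 = 0")
    case True then show ?thesis using that[OF D0] by blast
  next
    case False
    then have "SS D0 = 1" by simp
    then have "SS (\<lambda>z. \<not> D0 z) = 0" using flip by simp
    moreover have "\<forall>z\<in>lvl k. ((\<not> D0 z) \<noteq> (\<not> D0 (m z))) = T' z" using D0 by simp
    ultimately show ?thesis using that[of "\<lambda>z. \<not> D0 z"] by blast
  qed
  from solE[OF S SD[unfolded SS_def]]
  obtain A :: "bool list \<Rightarrow> bool" where A: "\<forall>z\<in>lvl k. (A z \<noteq> A (m z)) = (T (z @ [False]) \<noteq> (w z \<and> D (m z)))" ..
  define U where "U x = (A (butlast x) \<noteq> (last x \<and> D (butlast x)))" for x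
  show "\<exists>u::bool list \<Rightarrow> bool. \<forall>x\<in>lvl (Suc k). (u x \<noteq> u (extd k w m x)) = T x"
  proof (intro exI[of _ U] ballI)
    fix x assume "x \<in> lvl (Suc k)"
    then obtain z b where x: "x = z @ [b]" and z: "z \<in> lvl k"
      by (cases x rule: rev_exhaust) (auto simp: lvl_def)
    have ex: "extd k w m x = m z @ [b \<noteq> w z]" using x z by (simp add: extd_def lvl_def)
    have a: "(A z \<noteq> A (m z)) = (T (z @ [False]) \<noteq> (w z \<and> D (m z)))" using A z by blast
    have d: "(D z \<noteq> D (m z)) = (T (z @ [False]) \<noteq> T (z @ [True]))" using D z by (simp add: T'_def)
    show "(U x \<noteq> U (extd k w m x)) = T x"
      unfolding U_def ex unfolding x using a d
      by (cases b; cases "w z"; cases "D z"; cases "D (m z)"; cases "A z"; cases "A (m z)"; cases "T (z @ [False])"; cases "T (z @ [True])") simp_all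
  qed
qed

lemma step:
  assumes p: "tree_aut k p" and m: "tree_aut k m" and S: "sol k m"
    and g: "tree_aut (Suc k) g" and pg: "par g k = 0"
    and r: "rst k g = p \<circ> m \<circ> finv p \<circ> finv m"
  shows "\<exists>u. g = extd k u p \<circ> extd k w m \<circ> finv (extd k u p) \<circ> finv (extd k w m)"
proof -
  define t where "t z = (sw g (m (p z)) \<noteq> (w (p z) \<noteq> w z))" for z
  have mp: "tree_aut k (m \<circ> p)" using aut_comp[OF m p] .
  have e1: "(\<Sum>z\<in>lvl k. (of_bool (t z) :: bit)) =
      (\<Sum>z\<in>lvl k. of_bool (sw g ((m \<circ> p) z))) + (\<Sum>z\<in>lvl k. of_bool (w (p z))) + (\<Sum>z\<in>lvl k. of_bool (w z))"
    by (simp only: t_def xor3_bit sum.distrib o_apply)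
  have e2: "(\<Sum>z\<in>lvl k. of_bool (sw g ((m \<circ> p) z))) = par g k"
    unfolding par_def by (rule sum.reindex_bij_betw[OF aut_bij_lvl[OF mp], of "\<lambda>y. (of_bool (sw g y) :: bit)"])
  have e3: "(\<Sum>z\<in>lvl k. of_bool (w (p z))) = (\<Sum>z\<in>lvl k. (of_bool (w z) :: bit))"
    by (rule sum.reindex_bij_betw[OF aut_bij_lvl[OF p], of "\<lambda>y. (of_bool (w y) :: bit)"])
  have "(\<Sum>z\<in>lvl k. (of_bool (t z) :: bit)) = 0"
    unfolding e1 e2 e3 pg by (simp only: add_0_left bit_self add.assoc)
  from solE[OF S this] obtain u :: "bool list \<Rightarrow> bool" where u: "\<forall>z\<in>lvl k. (u z \<noteq> u (m z)) = t z" ..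
  have lps: "lp m" "lp (finv p)" "lp (finv m)"
    using aut_lp[OF m] aut_lp[OF aut_inv[OF p]] aut_lp[OF aut_inv[OF m]] by auto
  have comp: "extd k u p \<circ> extd k w m \<circ> finv (extd k u p) \<circ> finv (extd k w m) =
     extd k (\<lambda>y. w (finv m y) \<noteq> (u (finv p (finv m y)) \<noteq> (w (finv p (finv m y)) \<noteq> u (m (finv p (finv m y))))))
       (p \<circ> m \<circ> finv p \<circ> finv m)"
    by (simp add: extd_inv[OF p] extd_inv[OF m] extd_comp lps)
  have "g = extd k (sw g) (p \<circ> m \<circ> finv p \<circ> finv m)" using g_decomp[OF g] unfolding r .
  also have "\<dots> = extd k (\<lambda>y. w (finv m y) \<noteq> (u (finv p (finv m y)) \<noteq> (w (finv p (finv m y)) \<noteq> u (m (finv p (finv m y))))))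
       (p \<circ> m \<circ> finv p \<circ> finv m)"
  proof (rule extd_cong)
    fix y assume y: "y \<in> lvl k"
    define z where "z = finv p (finv m y)"
    have pm: "p permutes tree_vertices k" "m permutes tree_vertices k" using p m by (auto simp: tree_aut_def)
    have pz: "p z = finv m y" unfolding z_def using permutes_inverses(1)[OF pm(1)] by simp
    have mpz: "m (p z) = y" unfolding pz using permutes_inverses(1)[OF pm(2)] by simp
    have "z \<in> lvl k" using y aut_len[OF aut_inv[OF p]] aut_len[OF aut_inv[OF m]] by (simp add: z_def lvl_def)
    then have uz: "(u z \<noteq> u (m z)) = t z" using u by blast
    show "sw g y = (w (finv m y) \<noteq> (u (finv p (finv m y)) \<noteq> (w (finv p (finv m y)) \<noteq> u (m (finv p (finv m y))))))"
      using uz unfolding t_def mpz z_def[symmetric] unfolding pz[symmetric]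
      by (cases "sw g y"; cases "w (p z)"; cases "w z"; cases "u z"; cases "u (m z)") simp_all
  qed
  finally show ?thesis using comp by (intro exI[of _ u]) (simp only: comp)
qed


definition K :: "nat \<Rightarrow> (bool list \<Rightarrow> bool list) set" where
  "K k = {g. tree_aut k g \<and> (\<forall>i<k. par g i = 0)}"

lemma K_subgroup: "subgroup (K k) (B k)"
proof (rule group.subgroupI[OF group_B])
  show "K k \<subseteq> carrier (B k)" by (auto simp: K_def B_def)
  show "K k \<noteq> {}" using aut_id[of k] par_id by (auto simp: K_def)
  fix a assume a: "a \<in> K k"
  then have ta: "tree_aut k a" by (simp add: K_def)
  show "inv\<^bsub>B k\<^esub> a \<in> K k"
    using a aut_inv[OF ta] par_inv[OF ta] by (simp add: B_inv[OF ta] K_def)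
  fix b assume b: "b \<in> K k"
  then have tb: "tree_aut k b" by (simp add: K_def)
  show "a \<otimes>\<^bsub>B k\<^esub> b \<in> K k"
    using a b aut_comp[OF ta tb] par_comp[OF ta tb] by (simp add: B_def K_def)
qed

lemma derived_K: "derived (B k) (carrier (B k)) \<subseteq> K k"
  unfolding derived_def
proof (rule group.generate_subgroup_incl[OF group_B _ K_subgroup])
  show "derived_set (B k) (carrier (B k)) \<subseteq> K k"
  proof
    fix x assume "x \<in> derived_set (B k) (carrier (B k))"
    then obtain a b where ab: "tree_aut k a" "tree_aut k b"
      and x: "x = a \<otimes>\<^bsub>B k\<^esub> b \<otimes>\<^bsub>B k\<^esub> inv\<^bsub>B k\<^esub> a \<otimes>\<^bsub>B k\<^esub> inv\<^bsub>B k\<^esub> b"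
      by (auto simp: B_def)
    have "x = a \<circ> b \<circ> finv a \<circ> finv b" using x unfolding B_inv[OF ab(1)] B_inv[OF ab(2)] by (simp add: B_def)
    moreover have "tree_aut k (a \<circ> b \<circ> finv a \<circ> finv b)"
      using ab by (simp add: aut_comp aut_inv)
    ultimately show "x \<in> K k" using par_comm[OF ab] by (simp add: K_def)
  qed
qed

lemma rst_K:
  assumes "g \<in> K (Suc k)" shows "rst k g \<in> K k"
proof -
  have g: "tree_aut (Suc k) g" using assms by (simp add: K_def)
  have "par (rst k g) i = par g i" if "i < k" for i
    unfolding par_def by (rule sum.cong) (auto simp: sw_rst lvl_def that)
  then show ?thesis using assms rst_aut[OF g] by (simp add: K_def)
qed

lemma aut0: "tree_aut 0 g \<Longrightarrow> g = id"
proof (rule ext)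
  fix xs assume a: "tree_aut 0 g"
  show "g xs = id xs"
  proof (cases "xs = []")
    case True then show ?thesis using aut_nil[OF a] by simp
  next
    case False
    then have "xs \<notin> tree_vertices 0" by (simp add: tree_vertices_def)
    then show ?thesis using a permutes_not_in by (auto simp: tree_aut_def)
  qed
qed

lemma w_sum: "(\<Sum>z\<in>lvl k. (of_bool (z = replicate k False) :: bit)) = 1"
proof -
  have "(\<Sum>z\<in>lvl k. (of_bool (z = replicate k False) :: bit)) =
      (\<Sum>z\<in>lvl k. if z = replicate k False then 1 else 0)"
    by (rule sum.cong) auto
  also have "\<dots> = 1" using finite_lvl[of k] by (simp add: sum.delta' lvl_def)
  finally show ?thesis .
qed

lemma Q: "\<forall>g\<in>K k. \<exists>p m. tree_aut k p \<and> tree_aut k m \<and> sol k m \<and> g = p \<circ> m \<circ> finv p \<circ> finv m"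
proof (induction k)
  case 0
  show ?case
  proof
    fix g assume "g \<in> K 0"
    then have "g = id" using aut0 by (simp add: K_def)
    then show "\<exists>p m. tree_aut 0 p \<and> tree_aut 0 m \<and> sol 0 m \<and> g = p \<circ> m \<circ> finv p \<circ> finv m"
      using aut_id sol0 by (intro exI[of _ id]) simp
  qed
next
  case (Suc k)
  show ?case
  proof
    fix g assume gK: "g \<in> K (Suc k)"
    then have g: "tree_aut (Suc k) g" and pg: "par g k = 0" by (auto simp: K_def)
    obtain p m where p: "tree_aut k p" and m: "tree_aut k m" and S: "sol k m"
      and r: "rst k g = p \<circ> m \<circ> finv p \<circ> finv m"
      using Suc.IH rst_K[OF gK] by blast
    define w where "w = (\<lambda>z. z = replicate k False)"
    obtain u where u: "g = extd k u p \<circ> extd k w m \<circ> finv (extd k u p) \<circ> finv (extd k w m)"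
      using step[OF p m S g pg r] by blast
    have "sol (Suc k) (extd k w m)" by (rule sol_lift[OF S]) (simp only: w_def w_sum)
    then show "\<exists>p m. tree_aut (Suc k) p \<and> tree_aut (Suc k) m \<and> sol (Suc k) m \<and> g = p \<circ> m \<circ> finv p \<circ> finv m"
      using u extd_aut[OF p] extd_aut[OF m] by blast
  qed
qed

definition liftp :: "nat \<Rightarrow> (bool list \<Rightarrow> bool list) \<Rightarrow> bool list \<Rightarrow> bool list" where
  "liftp n s = (\<lambda>xs. if length xs = Suc n then s (butlast xs) @ [last xs] else xs)"

lemma liftp_id: "liftp n id = id"
proof (rule ext)
  fix xs show "liftp n id xs = id xs"
    by (cases xs rule: rev_exhaust) (auto simp: liftp_def)
qed

lemma liftp_swap:
  assumes "a \<in> lvl n" "b \<in> lvl n"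
  shows "liftp n (transpose a b \<circ> s) =
    transpose (a @ [False]) (b @ [False]) \<circ> transpose (a @ [True]) (b @ [True]) \<circ> liftp n s"
proof (rule ext)
  fix xs
  show "liftp n (transpose a b \<circ> s) xs =
    (transpose (a @ [False]) (b @ [False]) \<circ> transpose (a @ [True]) (b @ [True]) \<circ> liftp n s) xs"
  proof (cases "length xs = Suc n")
    case True
    then obtain y c where xs: "xs = y @ [c]" by (cases xs rule: rev_exhaust) auto
    show ?thesis unfolding xs using True xs
      by (cases c) (auto simp: liftp_def transpose_def)
  next
    case False
    then show ?thesis using assms by (auto simp: liftp_def transpose_def lvl_def)
  qed
qed

lemma liftp_even:
  assumes "s permutes lvl n"
  shows "permutation (liftp n s) \<and> evenperm (liftp n s)"
  using assms finite_lvl[of n]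
proof (induction s rule: permutes_induct)
  case id
  have "liftp n (\<lambda>a. a) = id" using liftp_id[of n] by (simp add: id_def)
  then show ?case by simp
next
  case (swap a b p)
  have ne: "a @ [False] \<noteq> b @ [False]" "a @ [True] \<noteq> b @ [True]" using swap by auto
  have pt: "permutation (transpose (a @ [False]) (b @ [False]))" "permutation (transpose (a @ [True]) (b @ [True]))"
    by (simp_all add: permutation_swap_id)
  have pp: "permutation (transpose (a @ [False]) (b @ [False]) \<circ> transpose (a @ [True]) (b @ [True]))"
    using pt permutation_compose by blast
  have ep: "evenperm (transpose (a @ [False]) (b @ [False]) \<circ> transpose (a @ [True]) (b @ [True]))"
    using evenperm_comp[OF pt] ne by (simp add: evenperm_swap)
  have ih: "permutation (liftp n p)" "evenperm (liftp n p)" using swap by blast+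
  have c1: "permutation (transpose (a @ [False]) (b @ [False]) \<circ> transpose (a @ [True]) (b @ [True]) \<circ> liftp n p)"
    by (rule permutation_compose[OF pp ih(1)])
  have c2: "evenperm (transpose (a @ [False]) (b @ [False]) \<circ> transpose (a @ [True]) (b @ [True]) \<circ> liftp n p)"
    using evenperm_comp[OF pp ih(1)] ep ih(2) by blast
  show ?case unfolding liftp_swap[OF swap(1,2)] using c1 c2 by blast
qed

lemma leaves_lvl: "tree_leaves k = lvl k"
  by (simp add: tree_leaves_def lvl_def)

lemma G_member:
  assumes m: "tree_aut k m"
  shows "extd k (\<lambda>_. False) m \<in> G (Suc k)"
proof -
  have la: "leaf_action (Suc k) (extd k (\<lambda>_. False) m) = liftp k (leaf_action k m)"
  proof (rule ext)
    fix xs show "leaf_action (Suc k) (extd k (\<lambda>_. False) m) xs = liftp k (leaf_action k m) xs"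
      by (auto simp: leaf_action_def extd_def liftp_def tree_leaves_def)
  qed
  have "bij_betw (leaf_action k m) (lvl k) (lvl k)"
    using aut_bij_lvl[OF m, of k] by (rule bij_betw_cong[THEN iffD1, rotated]) (simp add: leaf_action_def leaves_lvl)
  moreover have "leaf_action k m x = x" if "x \<notin> lvl k" for x
    using that by (simp add: leaf_action_def leaves_lvl)
  ultimately have "leaf_action k m permutes lvl k" by (rule bij_imp_permutes)
  then have "evenperm (leaf_action (Suc k) (extd k (\<lambda>_. False) m))"
    unfolding la using liftp_even by blast
  then show ?thesis using extd_aut[OF m] by (simp add: G_def B_def)
qed

lemma main_K:
  assumes "g \<in> K (Suc k)"
  shows "\<exists>f l. tree_aut (Suc k) f \<and> l \<in> G (Suc k) \<and> g = f \<circ> l \<circ> finv f \<circ> finv l"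
proof -
  have g: "tree_aut (Suc k) g" and pg: "par g k = 0" using assms by (auto simp: K_def)
  obtain p m where p: "tree_aut k p" and m: "tree_aut k m" and S: "sol k m"
    and r: "rst k g = p \<circ> m \<circ> finv p \<circ> finv m"
    using Q rst_K[OF assms] by blast
  obtain u where u: "g = extd k u p \<circ> extd k (\<lambda>_. False) m \<circ> finv (extd k u p) \<circ> finv (extd k (\<lambda>_. False) m)"
    using step[OF p m S g pg r] by blast
  then show ?thesis using extd_aut[OF p] G_member[OF m] by blast
qed

lemma (in group) inv_comm:
  assumes "a \<in> carrier G" "b \<in> carrier G"
  shows "inv (a \<otimes> b \<otimes> inv a \<otimes> inv b) = b \<otimes> a \<otimes> inv b \<otimes> inv a"
  using assms by (simp add: inv_mult_group m_assoc)

theorem theorem3: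
  fixes k :: nat
  assumes "k \<ge> 1"
  shows "derived (B k) (carrier (B k)) = {comm k f l | f l. f \<in> carrier (B k) \<and> l \<in> G k}
       \<and> derived (B k) (carrier (B k)) = {comm k l f | f l. f \<in> carrier (B k) \<and> l \<in> G k}"
proof -
  obtain k' where k: "k = Suc k'" using assms by (cases k) auto
  interpret grp: group "B k" by (rule group_B)
  have GB: "G k \<subseteq> carrier (B k)" by (auto simp: G_def)
  have in_der: "comm k a b \<in> derived (B k) (carrier (B k))" if "a \<in> carrier (B k)" "b \<in> carrier (B k)" for a b
  proof -
    have "comm k a b \<in> derived_set (B k) (carrier (B k))" using that unfolding comm_def by blast
    then show ?thesis unfolding derived_def by (rule generate.incl)
  qed
  have sub: "subgroup (derived (B k) (carrier (B k))) (B k)" by (rule grp.derived_is_subgroup) simp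
  have dec: "\<exists>f l. f \<in> carrier (B k) \<and> l \<in> G k \<and> g = comm k f l" if "g \<in> derived (B k) (carrier (B k))" for g
  proof -
    have "g \<in> K (Suc k')" using derived_K that k by blast
    then obtain f l where f: "tree_aut (Suc k') f" and l: "l \<in> G (Suc k')" and e: "g = f \<circ> l \<circ> finv f \<circ> finv l"
      using main_K by blast
    have "tree_aut (Suc k') l" using l by (simp add: G_def B_def)
    then have "g = comm k f l" using comm_eq[OF f] e k by simp
    then show ?thesis using f l k by (auto simp: B_def)
  qed
  have s1: "derived (B k) (carrier (B k)) = {comm k f l | f l. f \<in> carrier (B k) \<and> l \<in> G k}"
  proof
    show "derived (B k) (carrier (B k)) \<subseteq> {comm k f l | f l. f \<in> carrier (B k) \<and> l \<in> G k}"
      using dec by blast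
    show "{comm k f l | f l. f \<in> carrier (B k) \<and> l \<in> G k} \<subseteq> derived (B k) (carrier (B k))"
      using in_der GB by blast
  qed
  have s2: "derived (B k) (carrier (B k)) = {comm k l f | f l. f \<in> carrier (B k) \<and> l \<in> G k}"
  proof
    show "derived (B k) (carrier (B k)) \<subseteq> {comm k l f | f l. f \<in> carrier (B k) \<and> l \<in> G k}"
    proof
      fix g assume g: "g \<in> derived (B k) (carrier (B k))"
      then have gc: "g \<in> carrier (B k)" using subgroup.subset[OF sub] by blast
      have "inv\<^bsub>B k\<^esub> g \<in> derived (B k) (carrier (B k))" using subgroup.m_inv_closed[OF sub g] .
      then obtain f l where f: "f \<in> carrier (B k)" and l: "l \<in> G k" and e: "inv\<^bsub>B k\<^esub> g = comm k f l"
        using dec by blast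
      have lc: "l \<in> carrier (B k)" using l GB by blast
      have "g = inv\<^bsub>B k\<^esub> (inv\<^bsub>B k\<^esub> g)" using gc by simp
      also have "\<dots> = comm k l f" unfolding e comm_def using grp.inv_comm[OF f lc] .
      finally show "g \<in> {comm k l f | f l. f \<in> carrier (B k) \<and> l \<in> G k}" using f l by blast
    qed
    show "{comm k l f | f l. f \<in> carrier (B k) \<and> l \<in> G k} \<subseteq> derived (B k) (carrier (B k))"
      using in_der GB by blast
  qed
  show ?thesis using s1 s2 by blast
qed

end
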